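(* In the setting described in the context, let $\phi,\phi_0\in\Gamma$ be, respectively, a quasi-lower solution and a quasi-upper solution of the wave equation $(W)$, with $\phi(t)\le\phi_0(t)$ for all $t\in\mathbb{R}$. Let $\phi_1:=G(H(\phi_0))$. Then (i) $\phi_1\in\Gamma$; and (ii) $\phi_1$ is an upper solution of $(W)$ and $\phi(t)\le\phi_1(t)\le\phi_0(t)$ for all $t\in\mathbb{R}$.
   Context: Fix $n\ge1$, $\tau\ge0$, a wave speed $c>0$, $D=\mathrm{diag}(d_1,\dots,d_n)$ with all $d_i>0$, and $\mathbf K=(K_1,\dots,K_n)^T$ with all $K_i>0$. Vectors in $\mathbb{R}^n$ are ordered componentwise: $x\le y$ iff $x_i\le y_i$ for all $i$; $[\mathbf 0,\mathbf K]=\{v:\mathbf 0\le v\le\mathbf K\}$. Let $f:C([-\tau,0],\mathbb{R}^n)\to\mathbb{R}^n$ be continuous with $f(\hat 0)=f(\hat K)=0$ and $f(\hat u)\neq0$ for every $u\in[\mathbf 0,\mathbf K]\setminus\{\mathbf 0,\mathbf K\}$, where $\hat u$ denotes the constant function with value $u$. Let $X_c=C([-c\tau,0],\mathbb{R}^n)$ and $f_c:X_c\to\mathbb{R}^n$, $f_c(\psi)=f(\psi^c)$ with $\psi^c(\theta)=\psi(c\theta)$, $\theta\in[-\tau,0]$. For $\phi\in C(\mathbb{R},\mathbb{R}^n)$ and $t\in\mathbb{R}$, $\phi_t\in X_c$ is $\phi_t(s)=\phi(t+s)$. The wave equation is $$D\phi''(t)-c\phi'(t)+f_c(\phi_t)=\mathbf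 0,\quad t\in\mathbb{R}.\tag{W}$$ Assume there is $\beta=\mathrm{diag}(\beta_1,\dots,\beta_n)$ with all $\beta_i>0$ such that $f_c(\phi)-f_c(\psi)+\beta[\phi(0)-\psi(0)]\ge\mathbf 0$ whenever $\phi,\psi\in X_c$ with $\mathbf 0\le\psi(\theta)\le\phi(\theta)\le\mathbf K$ for all $\theta$. Define $H(\phi)(t)=f_c(\phi_t)+\beta\phi(t)$. Let $\Gamma$ be the set of nondecreasing $\varphi\in C(\mathbb{R},\mathbb{R}^n)$ with $\lim_{t\to-\infty}\varphi(t)=\mathbf 0$ and $\lim_{t\to+\infty}\varphi(t)=\mathbf K$. For $i=1,\dots,n$ let $\lambda_{1i}=\frac{c-\sqrt{c^2+4\beta_id_i}}{2d_i}<0<\lambda_{2i}=\frac{c+\sqrt{c^2+4\beta_id_i}}{2d_i}$. For bounded $h:\mathbb{R}\to\mathbb{R}^n$, $G(h)$ is the unique bounded $C^1$ solution of $Dx''-cx'-\beta x+h=\mathbf 0$, given componentwise by $G_i(h)(t)=\frac{1}{d_i(\lambda_{2i}-\lambda_{1i})}\big(\int_{-\infty}^te^{\lambda_{1i}(t-s)}h_i(s)ds+\int_t^\infty e^{\lambda_{2i}(t-s)}h_i(s)ds\big)$. An upper solution of (W) is $\rho\in C^2(\mathbb{R},\mathbb{R}^n)$ with $\rho,\rho',\rho''$ bounded and $D\rho''(t)-c\rho'(t)+f_c(\rho_t)\le\mathbf 0$ for all $t$. A quasi-upper solution of (W) is $\rho\in C^1(\mathbb{R},\mathbb{R}^n)$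 with $\rho,\rho'$ bounded on $\mathbb{R}$, $\rho''$ existing, continuous and bounded on $\mathbb{R}\setminus\{0\}$ with one-sided limits at $0$, and $D\rho''(t)-c\rho'(t)+f_c(\rho_t)\le\mathbf 0$ for all $t\ne0$. Quasi-lower solutions are defined the same way with the inequality reversed ($\ge\mathbf 0$). *)

theory Defs
  imports "HOL-Analysis.Analysis"
begin

text \<open>Vectors in R^n are modelled as real^'n with 'n a finite index type; the order on
real^'n is the library's componentwise order. Elements of C([-a,0],R^n) are modelled as
functions real => real^'n, of which only the values on [-a,0] matter.
Diagonal matrices D and beta are modelled by their diagonal vectors d and beta.\<close>

definition vmul :: "real^'n \<Rightarrow> real^'n \<Rightarrow> real^'n" where
  "vmul a x = (\<chi> i. a$i * x$i)"

definition const_fun :: "real^'n \<Rightarrow> (real \<Rightarrow> real^'n)" where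
  "const_fun u = (\<lambda>\<theta>. u)"

definition local_functional :: "real \<Rightarrow> ((real \<Rightarrow> real^'n) \<Rightarrow> real^'n) \<Rightarrow> bool" where
  "local_functional \<tau> f \<longleftrightarrow>
     (\<forall>\<phi> \<psi>. (\<forall>\<theta>\<in>{-\<tau>..0}. \<phi> \<theta> = \<psi> \<theta>) \<longrightarrow> f \<phi> = f \<psi>)"

definition continuous_functional :: "real \<Rightarrow> ((real \<Rightarrow> real^'n) \<Rightarrow> real^'n) \<Rightarrow> bool" where
  "continuous_functional \<tau> f \<longleftrightarrow>
     (\<forall>\<phi>. continuous_on {-\<tau>..0} \<phi> \<longrightarrow>
        (\<forall>\<epsilon>>0. \<exists>\<delta>>0. \<forall>\<psi>. continuous_on {-\<tau>..0} \<psi> \<and>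
            (\<forall>\<theta>\<in>{-\<tau>..0}. dist (\<psi> \<theta>) (\<phi> \<theta>) < \<delta>) \<longrightarrow> dist (f \<psi>) (f \<phi>) < \<epsilon>))"

definition fc :: "((real \<Rightarrow> real^'n) \<Rightarrow> real^'n) \<Rightarrow> real \<Rightarrow> (real \<Rightarrow> real^'n) \<Rightarrow> real^'n" where
  "fc f c \<psi> = f (\<lambda>\<theta>. \<psi> (c * \<theta>))"

definition shift :: "(real \<Rightarrow> real^'n) \<Rightarrow> real \<Rightarrow> (real \<Rightarrow> real^'n)" where
  "shift \<phi> t = (\<lambda>s. \<phi> (t + s))"

definition Hop :: "((real \<Rightarrow> real^'n) \<Rightarrow> real^'n) \<Rightarrow> real \<Rightarrow> real^'n \<Rightarrow> (real \<Rightarrow> real^'n) \<Rightarrow> (real \<Rightarrow> real^'n)" where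
  "Hop f c \<beta> \<phi> = (\<lambda>t. fc f c (shift \<phi> t) + vmul \<beta> (\<phi> t))"

definition lam1 :: "real \<Rightarrow> real \<Rightarrow> real \<Rightarrow> real" where
  "lam1 c b d = (c - sqrt (c\<^sup>2 + 4 * b * d)) / (2 * d)"

definition lam2 :: "real \<Rightarrow> real \<Rightarrow> real \<Rightarrow> real" where
  "lam2 c b d = (c + sqrt (c\<^sup>2 + 4 * b * d)) / (2 * d)"

definition Gop :: "real \<Rightarrow> real^'n \<Rightarrow> real^'n \<Rightarrow> (real \<Rightarrow> real^'n) \<Rightarrow> (real \<Rightarrow> real^'n)" where
  "Gop c \<beta> d h = (\<lambda>t. \<chi> i.
     1 / (d$i * (lam2 c (\<beta>$i) (d$i) - lam1 c (\<beta>$i) (d$i))) *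
     (integral {..t} (\<lambda>s. exp (lam1 c (\<beta>$i) (d$i) * (t - s)) * h s $ i)
      + integral {t..} (\<lambda>s. exp (lam2 c (\<beta>$i) (d$i) * (t - s)) * h s $ i)))"

definition Gamma_set :: "real^'n \<Rightarrow> (real \<Rightarrow> real^'n) set" where
  "Gamma_set K = {\<phi>. continuous_on UNIV \<phi> \<and> mono \<phi> \<and>
                       (\<phi> \<longlongrightarrow> 0) at_bot \<and> (\<phi> \<longlongrightarrow> K) at_top}"

definition wave_lhs ::
  "((real \<Rightarrow> real^'n) \<Rightarrow> real^'n) \<Rightarrow> real \<Rightarrow> real^'n \<Rightarrow> (real \<Rightarrow> real^'n) \<Rightarrow> real^'n \<Rightarrow> real^'n \<Rightarrow> real \<Rightarrow> real^'n" where
  "wave_lhs f c d \<rho> \<rho>1 \<rho>2 t = vmul d \<rho>2 - c *\<^sub>R \<rho>1 + fc f c (shift \<rho> t)"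

definition upper_solution ::
  "((real \<Rightarrow> real^'n) \<Rightarrow> real^'n) \<Rightarrow> real \<Rightarrow> real^'n \<Rightarrow> (real \<Rightarrow> real^'n) \<Rightarrow> bool" where
  "upper_solution f c d \<rho> \<longleftrightarrow>
     (\<exists>\<rho>' \<rho>''. (\<forall>t. (\<rho> has_vector_derivative \<rho>' t) (at t)) \<and>
               (\<forall>t. (\<rho>' has_vector_derivative \<rho>'' t) (at t)) \<and>
               continuous_on UNIV \<rho>'' \<and>
               bounded (range \<rho>) \<and> bounded (range \<rho>') \<and> bounded (range \<rho>'') \<and>
               (\<forall>t. wave_lhs f c d \<rho> (\<rho>' t) (\<rho>'' t) t \<le> 0))"

definition quasi_solution_regular :: "(real \<Rightarrow> real^'n) \<Rightarrow> (real \<Rightarrow> real^'n) \<Rightarrow> (real \<Rightarrow> real^'n) \<Rightarrow> bool" where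
  "quasi_solution_regular \<rho> \<rho>' \<rho>'' \<longleftrightarrow>
     (\<forall>t. (\<rho> has_vector_derivative \<rho>' t) (at t)) \<and> continuous_on UNIV \<rho>' \<and>
     bounded (range \<rho>) \<and> bounded (range \<rho>') \<and>
     (\<forall>t. t \<noteq> 0 \<longrightarrow> (\<rho>' has_vector_derivative \<rho>'' t) (at t)) \<and>
     continuous_on (- {0}) \<rho>'' \<and> bounded (\<rho>'' ` (- {0})) \<and>
     (\<exists>L. (\<rho>'' \<longlongrightarrow> L) (at_left 0)) \<and> (\<exists>R. (\<rho>'' \<longlongrightarrow> R) (at_right 0))"

definition quasi_upper_solution ::
  "((real \<Rightarrow> real^'n) \<Rightarrow> real^'n) \<Rightarrow> real \<Rightarrow> real^'n \<Rightarrow> (real \<Rightarrow> real^'n) \<Rightarrow> bool" where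
  "quasi_upper_solution f c d \<rho> \<longleftrightarrow>
     (\<exists>\<rho>' \<rho>''. quasi_solution_regular \<rho> \<rho>' \<rho>'' \<and>
               (\<forall>t. t \<noteq> 0 \<longrightarrow> wave_lhs f c d \<rho> (\<rho>' t) (\<rho>'' t) t \<le> 0))"

definition quasi_lower_solution ::
  "((real \<Rightarrow> real^'n) \<Rightarrow> real^'n) \<Rightarrow> real \<Rightarrow> real^'n \<Rightarrow> (real \<Rightarrow> real^'n) \<Rightarrow> bool" where
  "quasi_lower_solution f c d \<rho> \<longleftrightarrow>
     (\<exists>\<rho>' \<rho>''. quasi_solution_regular \<rho> \<rho>' \<rho>'' \<and>
               (\<forall>t. t \<noteq> 0 \<longrightarrow> wave_lhs f c d \<rho> (\<rho>' t) (\<rho>'' t) t \<ge> 0))"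

end

theory Submission
  imports Defs
begin


lemma exp_int_atLeast:
  fixes b t :: real assumes "b > 0"
  shows "((\<lambda>s. exp (b*(t-s))) has_integral (1/b)) {t..}"
proof -
  have "((\<lambda>x::real. exp (-b*x)) has_integral exp (-b*t)/b) {t..}"
    using has_integral_exp_minus_to_infinity[OF assms] .
  from has_integral_mult_right[OF this, of "exp (b*t)"]
  have "((\<lambda>x. exp (b*t) * exp (-b*x)) has_integral exp (b*t) * (exp (-b*t)/b)) {t..}" .
  moreover have "exp (b*t) * (exp (-b*t)/b) = 1/b" by (simp add: exp_minus field_simps)
  moreover have "(\<lambda>x. exp (b*t) * exp (-b*x)) = (\<lambda>s. exp (b*(t-s)))"
    by (auto simp: fun_eq_iff mult_exp_exp algebra_simps)
  ultimately show ?thesis by metis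
qed

lemma exp_int_atMost:
  fixes a t :: real assumes "a < 0"
  shows "((\<lambda>s. exp (a*(t-s))) has_integral (-1/a)) {..t}"
proof -
  have "((\<lambda>x::real. exp (-(-a)*x)) has_integral exp (-(-a)*(-t))/(-a)) {-t..}"
    using has_integral_exp_minus_to_infinity[of "-a" "-t"] assms by simp
  from has_integral_mult_right[OF this, of "exp (a*t)"]
  have "((\<lambda>x. exp (a*t) * exp (-(-a)*x)) has_integral exp (a*t) * (exp (-(-a)*(-t))/(-a))) {-t..}" .
  moreover have "exp (a*t) * (exp (-(-a)*(-t))/(-a)) = -1/a" using assms by (simp add: exp_minus field_simps)
  moreover have "(\<lambda>x. exp (a*t) * exp (-(-a)*x)) = (\<lambda>x. exp (a*(t-(-x))))"
    by (auto simp: fun_eq_iff mult_exp_exp algebra_simps)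
  ultimately have h: "((\<lambda>x. exp (a*(t-(-x)))) has_integral (-1/a)) {-t..}" by metis
  have ai: "(\<lambda>x. \<bar>-1\<bar> * exp (a*(t-(-x)))) absolutely_integrable_on {-t..}"
    using h by (intro nonnegative_absolutely_integrable_1) (auto simp: has_integral_integrable)
  have "(\<lambda>s. exp (a*(t-s))) absolutely_integrable_on ((\<lambda>x. -x) ` {-t..}) \<and>
        integral ((\<lambda>x. -x) ` {-t..}) (\<lambda>s. exp (a*(t-s))) = -1/a"
    apply (rule has_absolute_integral_change_of_variables_1'[of "{-t..}" "\<lambda>x. -x" "\<lambda>_. -1", THEN iffD1])
    using ai h by (auto intro!: derivative_eq_intros simp: integral_unique)
  moreover have "(\<lambda>x::real. -x) ` {-t..} = {..t}" by (auto simp: image_iff intro: exI[of _ "- _"])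
  ultimately show ?thesis
    by (metis absolutely_integrable_on_def has_integral_integral)
qed


lemma int_atMost:
  fixes a t M :: real and h :: "real \<Rightarrow> real"
  assumes a: "a < 0" and hc: "continuous_on UNIV h" and hb: "\<And>s. \<bar>h s\<bar> \<le> M"
  shows "(\<lambda>s. exp (a*(t-s)) * h s) integrable_on {..t}"
    and "\<bar>integral {..t} (\<lambda>s. exp (a*(t-s)) * h s)\<bar> \<le> M * (-1/a)"
proof -
  have ex: "((\<lambda>s. M * exp (a*(t-s))) has_integral (M * (-1/a))) {..t}"
    using has_integral_mult_right[OF exp_int_atMost[OF a]] .
  have nb: "norm (exp (a*(t-s)) * h s) \<le> M * exp (a*(t-s))" for s
    using hb[of s] by (simp add: abs_mult mult.commute)
  have meas: "(\<lambda>s. exp (a*(t-s)) * h s) \<in> borel_measurable (lebesgue_on {..t})"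
    by (rule continuous_imp_measurable_on_sets_lebesgue)
       (auto intro!: continuous_intros continuous_on_subset[OF hc])
  show i: "(\<lambda>s. exp (a*(t-s)) * h s) integrable_on {..t}"
    by (rule measurable_bounded_by_integrable_imp_integrable[OF meas])
       (use ex nb in \<open>auto simp: has_integral_integrable\<close>)
  show "\<bar>integral {..t} (\<lambda>s. exp (a*(t-s)) * h s)\<bar> \<le> M * (-1/a)"
    using integral_norm_bound_integral[OF i has_integral_integrable[OF ex] nb]
    by (simp only: real_norm_def integral_unique[OF ex])
qed

lemma int_atLeast:
  fixes b t M :: real and h :: "real \<Rightarrow> real"
  assumes b: "b > 0" and hc: "continuous_on UNIV h" and hb: "\<And>s. \<bar>h s\<bar> \<le> M"
  shows "(\<lambda>s. exp (b*(t-s)) * h s) integrable_on {t..}"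
    and "\<bar>integral {t..} (\<lambda>s. exp (b*(t-s)) * h s)\<bar> \<le> M * (1/b)"
proof -
  have ex: "((\<lambda>s. M * exp (b*(t-s))) has_integral (M * (1/b))) {t..}"
    using has_integral_mult_right[OF exp_int_atLeast[OF b]] .
  have nb: "norm (exp (b*(t-s)) * h s) \<le> M * exp (b*(t-s))" for s
    using hb[of s] by (simp add: abs_mult mult.commute)
  have meas: "(\<lambda>s. exp (b*(t-s)) * h s) \<in> borel_measurable (lebesgue_on {t..})"
    by (rule continuous_imp_measurable_on_sets_lebesgue)
       (auto intro!: continuous_intros continuous_on_subset[OF hc])
  show i: "(\<lambda>s. exp (b*(t-s)) * h s) integrable_on {t..}"
    by (rule measurable_bounded_by_integrable_imp_integrable[OF meas])
       (use ex nb in \<open>auto simp: has_integral_integrable\<close>)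
  show "\<bar>integral {t..} (\<lambda>s. exp (b*(t-s)) * h s)\<bar> \<le> M * (1/b)"
    using integral_norm_bound_integral[OF i has_integral_integrable[OF ex] nb]
    by (simp only: real_norm_def integral_unique[OF ex])
qed


lemma split_atMost:
  fixes q :: "real \<Rightarrow> real"
  assumes "q integrable_on {..t0}" "continuous_on UNIV q" "t0 \<le> x"
  shows "q integrable_on {..x} \<and> integral {..x} q = integral {..t0} q + integral {t0..x} q"
proof -
  have i2: "q integrable_on {t0..x}"
    by (rule integrable_continuous_interval) (rule continuous_on_subset[OF assms(2)], auto)
  have "(q has_integral (integral {..t0} q + integral {t0..x} q)) ({..t0} \<union> {t0..x})"
    by (rule has_integral_Un) (use assms(1) i2 in \<open>auto intro: negligible_subset[of "{t0}"]\<close>)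
  moreover have "{..t0} \<union> {t0..x} = {..x}" using assms(3) by auto
  ultimately have "(q has_integral (integral {..t0} q + integral {t0..x} q)) {..x}" by simp
  then show ?thesis using integral_unique has_integral_integrable by blast
qed

lemma split_atLeast:
  fixes q :: "real \<Rightarrow> real"
  assumes "q integrable_on {x..}" "continuous_on UNIV q" "t0 \<le> x"
  shows "q integrable_on {t0..} \<and> integral {t0..} q = integral {t0..x} q + integral {x..} q"
proof -
  have i2: "q integrable_on {t0..x}"
    by (rule integrable_continuous_interval) (rule continuous_on_subset[OF assms(2)], auto)
  have "(q has_integral (integral {t0..x} q + integral {x..} q)) ({t0..x} \<union> {x..})"
    by (rule has_integral_Un) (use assms(1) i2 in \<open>auto intro: negligible_subset[of "{x}"]\<close>)
  moreover have "{t0..x} \<union> {x..} = {t0..}" using assms(3) by auto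
  ultimately have "(q has_integral (integral {t0..x} q + integral {x..} q)) {t0..}" by simp
  then show ?thesis using integral_unique has_integral_integrable by blast
qed

lemma deriv_interval_int:
  fixes q :: "real \<Rightarrow> real"
  assumes "continuous_on UNIV q"
  shows "((\<lambda>x. integral {t-1..x} q) has_real_derivative q t) (at t)"
proof -
  have "((\<lambda>x. integral {t-1..x} q) has_real_derivative q t) (at t within {t-1..t+1})"
    by (rule integral_has_real_derivative) (simp_all add: continuous_on_subset[OF assms subset_UNIV])
  moreover have "at t within {t-1..t+1} = at t" by (rule at_within_Icc_at) auto
  ultimately show ?thesis by simp
qed
lemma deriv_I1:
  fixes a M :: real and h :: "real \<Rightarrow> real"
  assumes a: "a < 0" and hc: "continuous_on UNIV h" and hb: "\<And>s. \<bar>h s\<bar> \<le> M"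
  shows "((\<lambda>t. integral {..t} (\<lambda>s. exp (a*(t-s)) * h s)) has_real_derivative
           (a * integral {..t} (\<lambda>s. exp (a*(t-s)) * h s) + h t)) (at t)"
proof -
  define q where "q s = exp (-a * s) * h s" for s
  have qc: "continuous_on UNIV q" unfolding q_def by (auto intro!: continuous_intros hc)
  have qi: "q integrable_on {..x}" and E: "integral {..x} (\<lambda>s. exp (a*(x-s)) * h s) = exp (a*x) * integral {..x} q" for x
  proof -
    have fe: "(\<lambda>s. exp (a*(x-s)) * h s) = (\<lambda>s. exp (a*x) * q s)"
      by (simp add: q_def fun_eq_iff right_diff_distrib exp_diff exp_minus divide_inverse)
    have "(\<lambda>s. exp (-a*x) * (exp (a*(x-s)) * h s)) integrable_on {..x}"
      by (rule integrable_on_mult_right) (rule int_atMost(1)[OF a hc hb])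
    moreover have "(\<lambda>s. exp (-a*x) * (exp (a*(x-s)) * h s)) = q"
      by (simp add: q_def fun_eq_iff right_diff_distrib exp_diff exp_minus field_simps)
    ultimately show "q integrable_on {..x}" by metis
    show "integral {..x} (\<lambda>s. exp (a*(x-s)) * h s) = exp (a*x) * integral {..x} q"
      unfolding fe by simp
  qed
  have D1: "((\<lambda>x. integral {..(t-1)} q + integral {t-1..x} q) has_real_derivative q t) (at t)"
    by (auto intro!: derivative_eq_intros deriv_interval_int[OF qc])
  have D2: "((\<lambda>x. integral {..x} q) has_real_derivative q t) (at t)"
    apply (rule has_field_derivative_transform_within_open[OF D1, of "{t-1<..}"])
      apply simp apply simp
    subgoal for x using split_atMost[OF qi qc, of "t-1" x] by simp
    done
  have D3: "((\<lambda>x. exp (a*x) * integral {..x} q) has_real_derivative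
      (a * exp (a*x) * integral {..x} q + exp (a*x) * q x)) (at x)" if "x = t" for x
    using that by (auto intro!: derivative_eq_intros D2)
  have hq: "exp (a*t) * q t = h t" by (simp add: q_def exp_minus field_simps)
  have fe: "(\<lambda>t. integral {..t} (\<lambda>s. exp (a*(t-s)) * h s)) = (\<lambda>x. exp (a*x) * integral {..x} q)"
    by (simp add: E)
  have val: "a * exp (a*t) * integral {..t} q + exp (a*t) * q t = a * integral {..t} (\<lambda>s. exp (a*(t-s)) * h s) + h t"
    using E[of t] hq by (simp add: algebra_simps)
  show ?thesis unfolding fe using D3[OF refl] unfolding val .
qed

lemma deriv_I2:
  fixes b M :: real and h :: "real \<Rightarrow> real"
  assumes b: "b > 0" and hc: "continuous_on UNIV h" and hb: "\<And>s. \<bar>h s\<bar> \<le> M"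
  shows "((\<lambda>t. integral {t..} (\<lambda>s. exp (b*(t-s)) * h s)) has_real_derivative
           (b * integral {t..} (\<lambda>s. exp (b*(t-s)) * h s) - h t)) (at t)"
proof -
  define q where "q s = exp (-b * s) * h s" for s
  have qc: "continuous_on UNIV q" unfolding q_def by (auto intro!: continuous_intros hc)
  have qi: "q integrable_on {x..}" and E: "integral {x..} (\<lambda>s. exp (b*(x-s)) * h s) = exp (b*x) * integral {x..} q" for x
  proof -
    have fe: "(\<lambda>s. exp (b*(x-s)) * h s) = (\<lambda>s. exp (b*x) * q s)"
      by (simp add: q_def fun_eq_iff right_diff_distrib exp_diff exp_minus divide_inverse)
    have "(\<lambda>s. exp (-b*x) * (exp (b*(x-s)) * h s)) integrable_on {x..}"
      by (rule integrable_on_mult_right) (rule int_atLeast(1)[OF b hc hb])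
    moreover have "(\<lambda>s. exp (-b*x) * (exp (b*(x-s)) * h s)) = q"
      by (simp add: q_def fun_eq_iff right_diff_distrib exp_diff exp_minus field_simps)
    ultimately show "q integrable_on {x..}" by metis
    show "integral {x..} (\<lambda>s. exp (b*(x-s)) * h s) = exp (b*x) * integral {x..} q"
      unfolding fe by simp
  qed
  have D1: "((\<lambda>x. integral {t-1..} q - integral {t-1..x} q) has_real_derivative (- q t)) (at t)"
    by (auto intro!: derivative_eq_intros deriv_interval_int[OF qc])
  have D2: "((\<lambda>x. integral {x..} q) has_real_derivative (- q t)) (at t)"
    apply (rule has_field_derivative_transform_within_open[OF D1, of "{t-1<..}"])
      apply simp apply simp
    subgoal for x using split_atLeast[OF qi qc, of "t-1" x] by simp
    done
  have D3: "((\<lambda>x. exp (b*x) * integral {x..} q) has_real_derivative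
      (b * exp (b*x) * integral {x..} q + exp (b*x) * (- q x))) (at x)" if "x = t" for x
    using that by (auto intro!: derivative_eq_intros D2)
  have hq: "exp (b*t) * q t = h t" by (simp add: q_def exp_minus field_simps)
  have fe: "(\<lambda>t. integral {t..} (\<lambda>s. exp (b*(t-s)) * h s)) = (\<lambda>x. exp (b*x) * integral {x..} q)"
    by (simp add: E)
  have val: "b * exp (b*t) * integral {t..} q + exp (b*t) * (- q t) = b * integral {t..} (\<lambda>s. exp (b*(t-s)) * h s) - h t"
    using E[of t] hq by (simp add: algebra_simps)
  show ?thesis unfolding fe using D3[OF refl] unfolding val .
qed




lemma maxp:
  fixes u ud udd :: "real \<Rightarrow> real" and d c \<beta> M :: real
  assumes d: "d > 0" and be: "\<beta> > 0"
    and du: "\<And>t. (u has_real_derivative ud t) (at t)"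
    and cud: "continuous_on UNIV ud"
    and dud: "\<And>t. t \<noteq> 0 \<Longrightarrow> (ud has_real_derivative udd t) (at t)"
    and lb: "\<And>t. u t \<ge> -M"
    and ineq: "\<And>t. t \<noteq> 0 \<Longrightarrow> d * udd t - c * ud t - \<beta> * u t \<le> 0"
  shows "u t0 \<ge> 0"
proof (rule ccontr)
  assume "\<not> u t0 \<ge> 0"
  then have ut0: "u t0 < 0" by simp
  define M' where "M' = \<bar>M\<bar>"
  have M': "M' \<ge> 0" "\<And>t. u t \<ge> -M'" using lb unfolding M'_def by (auto intro: order_trans[OF _ lb] simp del: abs_ge_zero) 
  define \<mu> where "\<mu> = min 1 (\<beta> / (2 * (d + \<bar>c\<bar>)))"
  have dc: "d + \<bar>c\<bar> > 0" using d by linarith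
  have mu: "\<mu> > 0" "\<mu> \<le> 1" "\<mu> \<le> \<beta> / (2 * (d + \<bar>c\<bar>))" unfolding \<mu>_def using be dc by auto
  have mudd: "d * \<mu>^2 + \<bar>c\<bar> * \<mu> \<le> \<beta> / 2"
  proof -
    have "d * \<mu>^2 \<le> d * \<mu>" using mu d by (simp add: power2_eq_square mult_left_le)
    then have "d * \<mu>^2 + \<bar>c\<bar> * \<mu> \<le> (d + \<bar>c\<bar>) * \<mu>" by (simp add: algebra_simps)
    also have "\<dots> \<le> (d + \<bar>c\<bar>) * (\<beta> / (2 * (d + \<bar>c\<bar>)))" using mu dc by (intro mult_left_mono) auto
    also have "\<dots> = \<beta> / 2" using dc by (simp add: field_simps)
    finally show ?thesis .
  qed
  define z where "z t = exp (\<mu> * t) + exp (- (\<mu> * t))" for t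
  define z1 where "z1 t = \<mu> * exp (\<mu> * t) - \<mu> * exp (- (\<mu> * t))" for t
  define z2 where "z2 t = \<mu>^2 * z t" for t
  have dz: "(z has_real_derivative z1 t) (at t)" for t
    unfolding z_def z1_def by (auto intro!: derivative_eq_intros)
  have dz1: "(z1 has_real_derivative z2 t) (at t)" for t
    unfolding z1_def z2_def z_def by (auto intro!: derivative_eq_intros simp: power2_eq_square algebra_simps)
  have zpos: "z t > 0" for t unfolding z_def by (simp add: add_pos_pos)
  have z1b: "\<bar>z1 t\<bar> \<le> \<mu> * z t" for t
  proof -
    have e: "\<bar>exp (\<mu> * t) - exp (- (\<mu> * t))\<bar> \<le> exp (\<mu> * t) + exp (- (\<mu> * t))"
      using exp_gt_zero[of "\<mu> * t"] exp_gt_zero[of "- (\<mu> * t)"] by linarith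
    have "\<bar>z1 t\<bar> = \<mu> * \<bar>exp (\<mu> * t) - exp (- (\<mu> * t))\<bar>"
      unfolding z1_def using mu(1) by (simp add: abs_mult right_diff_distrib[symmetric])
    also have "\<dots> \<le> \<mu> * z t" unfolding z_def using mu(1) by (intro mult_left_mono[OF e]) simp
    finally show ?thesis .
  qed
  have zineq: "d * z2 t - c * z1 t - \<beta> * z t \<le> 0" for t
  proof -
    have "- c * z1 t \<le> \<bar>c\<bar> * \<bar>z1 t\<bar>"
      by (simp only: mult_minus_left) (metis abs_ge_minus_self abs_mult)
    also have "\<dots> \<le> \<bar>c\<bar> * (\<mu> * z t)" by (rule mult_left_mono[OF z1b]) simp
    finally have A: "- c * z1 t \<le> \<bar>c\<bar> * (\<mu> * z t)" .
    have B: "(d * \<mu>^2 + \<bar>c\<bar> * \<mu> - \<beta>) * z t = d * z2 t + \<bar>c\<bar> * (\<mu> * z t) - \<beta> * z t"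
      unfolding z2_def by (simp add: algebra_simps)
    have C: "(d * \<mu>^2 + \<bar>c\<bar> * \<mu> - \<beta>) * z t \<le> 0"
      using mudd be zpos[of t] by (intro mult_nonpos_nonneg) auto
    show ?thesis using A B C by linarith
  qed
  have zge: "z t \<ge> 1 + \<mu> * \<bar>t\<bar>" for t
  proof -
    have "exp (\<mu> * \<bar>t\<bar>) \<ge> 1 + \<mu> * \<bar>t\<bar>" by (rule exp_ge_add_one_self)
    moreover have "z t \<ge> exp (\<mu> * \<bar>t\<bar>)" unfolding z_def by (cases "t \<ge> 0") auto
    ultimately show ?thesis by linarith
  qed
  define \<epsilon> where "\<epsilon> = - u t0 / (2 * z t0)"
  have eps: "\<epsilon> > 0" unfolding \<epsilon>_def using ut0 zpos[of t0] by (simp add: divide_neg_pos)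
  define v where "v t = u t + \<epsilon> * z t" for t
  define v1 where "v1 t = ud t + \<epsilon> * z1 t" for t
  define v2 where "v2 t = udd t + \<epsilon> * z2 t" for t
  have dv: "(v has_real_derivative v1 t) (at t)" for t
    unfolding v_def v1_def by (auto intro!: derivative_eq_intros du dz)
  have dv1: "(v1 has_real_derivative v2 t) (at t)" if "t \<noteq> 0" for t
    unfolding v1_def v2_def by (auto intro!: derivative_eq_intros dud dz1 that)
  have vineq: "d * v2 t - c * v1 t - \<beta> * v t \<le> 0" if "t \<noteq> 0" for t
  proof -
    have "d * v2 t - c * v1 t - \<beta> * v t = (d * udd t - c * ud t - \<beta> * u t) + \<epsilon> * (d * z2 t - c * z1 t - \<beta> * z t)"
      unfolding v_def v1_def v2_def by (simp add: algebra_simps)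
    also have "\<dots> \<le> 0" using ineq[OF that] zineq[of t] eps by (simp add: add_nonpos_nonpos mult_nonneg_nonpos)
    finally show ?thesis .
  qed
  have vt0: "v t0 < 0" unfolding v_def \<epsilon>_def using ut0 zpos[of t0] by (simp add: field_simps)
  define R where "R = M' / (\<epsilon> * \<mu>)"
  have vpos: "v t > 0" if "\<bar>t\<bar> \<ge> R" for t
  proof -
    have a1: "\<epsilon> * (1 + \<mu> * \<bar>t\<bar>) \<le> \<epsilon> * z t" by (rule mult_left_mono[OF zge]) (use eps in simp)
    have a2: "\<epsilon> * (\<mu> * R) \<le> \<epsilon> * (\<mu> * \<bar>t\<bar>)"
      by (rule mult_left_mono[OF mult_left_mono[OF that]]) (use eps mu in simp_all)
    have a3: "\<epsilon> * (\<mu> * R) = M'" unfolding R_def using eps mu by (simp add: field_simps)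
    have a4: "\<epsilon> * (1 + \<mu> * \<bar>t\<bar>) = \<epsilon> + \<epsilon> * (\<mu> * \<bar>t\<bar>)" by (simp add: algebra_simps)
    have "\<epsilon> * z t > M'" using a1 a2 a3 a4 eps by linarith
    then show ?thesis unfolding v_def using M'(2)[of t] by linarith
  qed
  have contv: "continuous_on UNIV v"
    using dv by (meson DERIV_isCont continuous_at_imp_continuous_on)
  have t0R: "t0 \<in> {-R..R}" using vpos[of t0] vt0 by (cases "\<bar>t0\<bar> \<ge> R") auto
  obtain ts where ts: "ts \<in> {-R..R}" "\<And>y. y \<in> {-R..R} \<Longrightarrow> v ts \<le> v y"
    using continuous_attains_inf[of "{-R..R}" v] t0R continuous_on_subset[OF contv subset_UNIV]
    by fastforce
  have vts: "v ts < 0" using ts(2)[OF t0R] vt0 by linarith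
  have gmin: "v ts \<le> v y" for y
  proof (cases "y \<in> {-R..R}")
    case True then show ?thesis using ts(2) by blast
  next
    case False then have "\<bar>y\<bar> \<ge> R" by auto
    then show ?thesis using vpos[of y] vts by linarith
  qed
  have v1ts: "v1 ts = 0"
    by (rule DERIV_local_min[OF dv, of 1]) (auto intro: gmin)
  have cz1: "isCont z1 x" for x using DERIV_isCont[OF dz1] .
  have cudx: "isCont ud x" for x using cud by (simp add: continuous_on_eq_continuous_at)
  have cv1x: "isCont v1 x" for x unfolding v1_def by (intro continuous_intros cudx cz1)
  have cont_w: "isCont (\<lambda>t. c * v1 t + \<beta> * v t) ts"
  proof -
    have "isCont v1 ts" by (rule cv1x)
    moreover have "isCont v ts" using dv DERIV_isCont by blast
    ultimately show ?thesis by (auto intro!: continuous_intros)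
  qed
  have "(\<lambda>t. c * v1 t + \<beta> * v t) \<midarrow>ts\<rightarrow> c * v1 ts + \<beta> * v ts"
    using cont_w by (simp add: isCont_def)
  moreover have "c * v1 ts + \<beta> * v ts < 0" using v1ts vts be by (simp add: mult_pos_neg)
  ultimately have "eventually (\<lambda>t. c * v1 t + \<beta> * v t < 0) (at ts)"
    using order_tendstoD(2) by blast
  then obtain \<delta> where del: "\<delta> > 0" "\<And>t. t \<noteq> ts \<Longrightarrow> dist t ts < \<delta> \<Longrightarrow> c * v1 t + \<beta> * v t < 0"
    unfolding eventually_at by blast
  define \<delta>' where "\<delta>' = (if ts < 0 then min \<delta> (- ts) else \<delta>)"
  have del': "\<delta>' > 0" "\<delta>' \<le> \<delta>" "ts < 0 \<Longrightarrow> ts + \<delta>' \<le> 0" unfolding \<delta>'_def using del by auto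
  define s where "s = ts + \<delta>' / 2"
  have s: "ts < s" "s < ts + \<delta>'" unfolding s_def using del' by auto
  obtain \<xi> where xi: "ts < \<xi>" "\<xi> < s" "v s - v ts = (s - ts) * v1 \<xi>"
    using MVT2[OF s(1), of v v1] dv by blast
  have cv1: "continuous_on {ts..\<xi>} v1"
    using cv1x by (simp add: continuous_at_imp_continuous_on)
  have nz: "x \<noteq> 0" if "ts < x" "x < \<xi>" for x
  proof
    assume "x = 0"
    then show False using that xi s del' by (cases "ts < 0") auto
  qed
  obtain l \<eta> where eta: "ts < \<eta>" "\<eta> < \<xi>" "(v1 has_real_derivative l) (at \<eta>)" "v1 \<xi> - v1 ts = (\<xi> - ts) * l"
    using MVT[OF xi(1) cv1] dv1 nz real_differentiable_def by metis
  have l: "l = v2 \<eta>" using DERIV_unique[OF eta(3) dv1[OF nz[OF eta(1,2)]]] .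
  have "c * v1 \<eta> + \<beta> * v \<eta> < 0"
    using del(2)[of \<eta>] eta xi s del' by (auto simp: dist_real_def)
  moreover have "d * v2 \<eta> - c * v1 \<eta> - \<beta> * v \<eta> \<le> 0" using vineq[OF nz[OF eta(1,2)]] .
  ultimately have "d * v2 \<eta> < 0" by linarith
  then have "v2 \<eta> < 0" using d by (simp add: mult_less_0_iff)
  then have "v1 \<xi> < 0" using eta(4) v1ts l eta(1,2) by (simp add: mult_pos_neg)
  then have "(s - ts) * v1 \<xi> < 0" using s(1) by (intro mult_pos_neg) simp_all
  then have "v s < v ts" using xi(3) by linarith
  then show False using gmin[of s] by linarith
qed




definition I1 :: "real \<Rightarrow> (real \<Rightarrow> real) \<Rightarrow> real \<Rightarrow> real" where
  "I1 a h t = integral {..t} (\<lambda>s. exp (a*(t-s)) * h s)"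
definition I2 :: "real \<Rightarrow> (real \<Rightarrow> real) \<Rightarrow> real \<Rightarrow> real" where
  "I2 b h t = integral {t..} (\<lambda>s. exp (b*(t-s)) * h s)"

lemma G_props:
  fixes a b c d \<beta> k M :: real and h :: "real \<Rightarrow> real"
  assumes a: "a < 0" and b: "b > 0"
    and ra: "d*a^2 - c*a - \<beta> = 0" and rb: "d*b^2 - c*b - \<beta> = 0" and k: "k * (d*(b-a)) = 1"
    and hc: "continuous_on UNIV h" and hb: "\<And>s. \<bar>h s\<bar> \<le> M"
  defines "g \<equiv> \<lambda>t. k * (I1 a h t + I2 b h t)"
    and "g1 \<equiv> \<lambda>t. k * (a * I1 a h t + b * I2 b h t)"
    and "g2 \<equiv> \<lambda>t. k * (a * (a * I1 a h t + h t) + b * (b * I2 b h t - h t))"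
  shows "(g has_real_derivative g1 t) (at t)"
    and "(g1 has_real_derivative g2 t) (at t)"
    and "continuous_on UNIV g1" and "continuous_on UNIV g2"
    and "\<exists>B. \<forall>t. \<bar>g t\<bar> \<le> B" and "\<exists>B. \<forall>t. \<bar>g1 t\<bar> \<le> B" and "\<exists>B. \<forall>t. \<bar>g2 t\<bar> \<le> B"
    and "d * g2 t - c * g1 t - \<beta> * g t + h t = 0"
proof -
  have D1: "(I1 a h has_real_derivative (a * I1 a h t + h t)) (at t)" for t
    unfolding I1_def[abs_def] by (rule deriv_I1[OF a hc hb])
  have D2: "(I2 b h has_real_derivative (b * I2 b h t - h t)) (at t)" for t
    unfolding I2_def[abs_def] by (rule deriv_I2[OF b hc hb])
  have B1: "\<bar>I1 a h t\<bar> \<le> M * (-1/a)" for t unfolding I1_def by (rule int_atMost(2)[OF a hc hb])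
  have B2: "\<bar>I2 b h t\<bar> \<le> M * (1/b)" for t unfolding I2_def by (rule int_atLeast(2)[OF b hc hb])
  have C1: "isCont (I1 a h) t" for t using DERIV_isCont[OF D1] .
  have C2: "isCont (I2 b h) t" for t using DERIV_isCont[OF D2] .
  have Ch: "isCont h t" for t using hc by (simp add: continuous_on_eq_continuous_at)
  show "(g has_real_derivative g1 t) (at t)"
    unfolding g_def g1_def by (auto intro!: derivative_eq_intros D1 D2 simp: algebra_simps)
  show "(g1 has_real_derivative g2 t) (at t)"
    unfolding g1_def g2_def by (auto intro!: derivative_eq_intros D1 D2 simp: algebra_simps)
  show "continuous_on UNIV g1"
    unfolding g1_def by (intro continuous_at_imp_continuous_on ballI continuous_intros C1 C2)
  show "continuous_on UNIV g2"
    unfolding g2_def by (intro continuous_at_imp_continuous_on ballI continuous_intros C1 C2 Ch)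
  define A1 where "A1 = M * (-1/a)"
  define A2 where "A2 = M * (1/b)"
  have B1': "\<bar>I1 a h t\<bar> \<le> A1" for t using B1 unfolding A1_def .
  have B2': "\<bar>I2 b h t\<bar> \<le> A2" for t using B2 unfolding A2_def .
  have hM: "\<bar>h t\<bar> \<le> M" for t by (rule hb)
  show "\<exists>B. \<forall>t. \<bar>g t\<bar> \<le> B"
  proof (intro exI allI)
    fix t
    have "\<bar>g t\<bar> = \<bar>k\<bar> * \<bar>I1 a h t + I2 b h t\<bar>" unfolding g_def by (simp add: abs_mult)
    also have "\<dots> \<le> \<bar>k\<bar> * (A1 + A2)"
      using B1'[of t] B2'[of t] by (intro mult_left_mono) auto
    finally show "\<bar>g t\<bar> \<le> \<bar>k\<bar> * (A1 + A2)" .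
  qed
  show "\<exists>B. \<forall>t. \<bar>g1 t\<bar> \<le> B"
  proof (intro exI allI)
    fix t
    have e1: "\<bar>a * I1 a h t\<bar> \<le> \<bar>a\<bar> * A1" using B1'[of t] by (simp add: abs_mult mult_left_mono)
    have e2: "\<bar>b * I2 b h t\<bar> \<le> \<bar>b\<bar> * A2" using B2'[of t] by (simp add: abs_mult mult_left_mono)
    have "\<bar>g1 t\<bar> = \<bar>k\<bar> * \<bar>a * I1 a h t + b * I2 b h t\<bar>" unfolding g1_def by (simp add: abs_mult)
    also have "\<dots> \<le> \<bar>k\<bar> * (\<bar>a\<bar> * A1 + \<bar>b\<bar> * A2)"
      using e1 e2 by (intro mult_left_mono) auto
    finally show "\<bar>g1 t\<bar> \<le> \<bar>k\<bar> * (\<bar>a\<bar> * A1 + \<bar>b\<bar> * A2)" .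
  qed
  show "\<exists>B. \<forall>t. \<bar>g2 t\<bar> \<le> B"
  proof (intro exI allI)
    fix t
    have e1: "\<bar>a * (a * I1 a h t + h t)\<bar> \<le> \<bar>a\<bar> * (\<bar>a\<bar> * A1 + M)"
    proof -
      have "\<bar>a * I1 a h t + h t\<bar> \<le> \<bar>a\<bar> * A1 + M"
      proof -
        have "\<bar>a * I1 a h t\<bar> \<le> \<bar>a\<bar> * A1" using B1'[of t] by (simp add: abs_mult mult_left_mono)
        then show ?thesis using abs_triangle_ineq[of "a * I1 a h t" "h t"] hM[of t] by linarith
      qed
      then show ?thesis by (simp add: abs_mult mult_left_mono)
    qed
    have e2: "\<bar>b * (b * I2 b h t - h t)\<bar> \<le> \<bar>b\<bar> * (\<bar>b\<bar> * A2 + M)"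
    proof -
      have "\<bar>b * I2 b h t - h t\<bar> \<le> \<bar>b\<bar> * A2 + M"
      proof -
        have "\<bar>b * I2 b h t\<bar> \<le> \<bar>b\<bar> * A2" using B2'[of t] by (simp add: abs_mult mult_left_mono)
        then show ?thesis using abs_triangle_ineq4[of "b * I2 b h t" "h t"] hM[of t] by linarith
      qed
      then show ?thesis by (simp add: abs_mult mult_left_mono)
    qed
    have "\<bar>g2 t\<bar> = \<bar>k\<bar> * \<bar>a * (a * I1 a h t + h t) + b * (b * I2 b h t - h t)\<bar>" unfolding g2_def by (simp add: abs_mult)
    also have "\<dots> \<le> \<bar>k\<bar> * (\<bar>a\<bar> * (\<bar>a\<bar> * A1 + M) + \<bar>b\<bar> * (\<bar>b\<bar> * A2 + M))"
      using e1 e2 abs_triangle_ineq[of "a * (a * I1 a h t + h t)" "b * (b * I2 b h t - h t)"]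
      by (intro mult_left_mono) linarith+
    finally show "\<bar>g2 t\<bar> \<le> \<bar>k\<bar> * (\<bar>a\<bar> * (\<bar>a\<bar> * A1 + M) + \<bar>b\<bar> * (\<bar>b\<bar> * A2 + M))" .
  qed
  have "d * g2 t - c * g1 t - \<beta> * g t + h t
        = k * ((d*a^2 - c*a - \<beta>) * I1 a h t + (d*b^2 - c*b - \<beta>) * I2 b h t) + (1 - k * (d*(b-a))) * h t"
    unfolding g_def g1_def g2_def by (simp add: algebra_simps power2_eq_square)
  then show "d * g2 t - c * g1 t - \<beta> * g t + h t = 0" using ra rb k by simp
qed




lemma vec_deriv_comp:
  fixes f :: "real \<Rightarrow> real^'n"
  assumes "(f has_vector_derivative f') (at t)"
  shows "((\<lambda>x. f x $ i) has_real_derivative f' $ i) (at t)"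
proof -
  have "((\<lambda>x. f x $ i) has_derivative (\<lambda>h. (h *\<^sub>R f') $ i)) (at t)"
    using bounded_linear.has_derivative[OF bounded_linear_vec_nth assms[unfolded has_vector_derivative_def]] .
  then show ?thesis by (simp add: has_real_derivative_iff_has_vector_derivative has_vector_derivative_def mult.commute)
qed

lemma vec_deriv_from_comp:
  fixes f :: "real \<Rightarrow> real^'n"
  assumes "\<And>i. ((\<lambda>x. f x $ i) has_real_derivative F i) (at t)"
  shows "(f has_vector_derivative (\<chi> i. F i)) (at t)"
proof -
  have e: "f = (\<lambda>x. \<Sum>i\<in>UNIV. (f x $ i) *\<^sub>R axis i 1)"
    by (auto simp: fun_eq_iff vec_eq_iff axis_def sum.delta' if_distrib cong: if_cong)
  have "((\<lambda>x. \<Sum>i\<in>UNIV. (f x $ i) *\<^sub>R axis i 1) has_vector_derivative (\<Sum>i\<in>UNIV. F i *\<^sub>R axis i (1::real))) (at t)"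
    by (intro has_vector_derivative_sum) (auto intro!: derivative_eq_intros assms)
  moreover have "(\<Sum>i\<in>UNIV. F i *\<^sub>R axis i (1::real)) = (\<chi> i. F i)"
    by (auto simp: vec_eq_iff axis_def sum.delta' if_distrib cong: if_cong)
  ultimately show ?thesis using e by metis
qed

lemma bounded_range_vec:
  fixes F :: "real \<Rightarrow> real^'n"
  assumes "\<And>i. \<exists>B. \<forall>t. \<bar>F t $ i\<bar> \<le> B"
  shows "bounded (range F)"
proof -
  obtain B where B: "\<And>i t. \<bar>F t $ i\<bar> \<le> B i" using assms by metis
  have "norm (F t) \<le> (\<Sum>i\<in>UNIV. B i)" for t
    using norm_le_l1_cart[of "F t"] sum_mono[of UNIV "\<lambda>i. \<bar>F t $ i\<bar>" B] B by fastforce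
  then show ?thesis unfolding bounded_iff by blast
qed

lemma lam_facts:
  fixes c \<beta> d :: real
  assumes d: "d > 0" and be: "\<beta> > 0"
  shows "lam1 c \<beta> d < 0" "lam2 c \<beta> d > 0"
    "d * (lam1 c \<beta> d)^2 - c * lam1 c \<beta> d - \<beta> = 0"
    "d * (lam2 c \<beta> d)^2 - c * lam2 c \<beta> d - \<beta> = 0"
    "(1 / (d * (lam2 c \<beta> d - lam1 c \<beta> d))) * (d * (lam2 c \<beta> d - lam1 c \<beta> d)) = 1"
proof -
  define s where "s = sqrt (c^2 + 4*\<beta>*d)"
  have pos: "c^2 + 4*\<beta>*d > c^2" using d be by simp
  have s2: "s^2 = c^2 + 4*\<beta>*d" unfolding s_def using pos
    by (simp add: add_nonneg_nonneg)
  have sgt: "s > \<bar>c\<bar>" unfolding s_def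
    using real_sqrt_less_mono[OF pos] by simp
  have l1: "lam1 c \<beta> d = (c - s) / (2*d)" unfolding lam1_def s_def ..
  have l2: "lam2 c \<beta> d = (c + s) / (2*d)" unfolding lam2_def s_def ..
  show "lam1 c \<beta> d < 0" unfolding l1 using sgt d by (simp add: divide_neg_pos)
  show "lam2 c \<beta> d > 0" unfolding l2 using sgt d by (simp add: divide_pos_pos)
  show "d * (lam1 c \<beta> d)^2 - c * lam1 c \<beta> d - \<beta> = 0"
    unfolding l1 using d s2 by (simp add: field_simps power2_eq_square)
  show "d * (lam2 c \<beta> d)^2 - c * lam2 c \<beta> d - \<beta> = 0"
    unfolding l2 using d s2 by (simp add: field_simps power2_eq_square)
  have "lam2 c \<beta> d - lam1 c \<beta> d = s / d" unfolding l1 l2 using d by (simp add: field_simps)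
  moreover have "s > 0" using sgt by linarith
  ultimately show "(1 / (d * (lam2 c \<beta> d - lam1 c \<beta> d))) * (d * (lam2 c \<beta> d - lam1 c \<beta> d)) = 1"
    using d by simp
qed




lemma vmul_nth[simp]: "vmul a x $ i = a $ i * x $ i"
  by (simp add: vmul_def)

lemma vmul_diff: "vmul a (x - y) = vmul a x - vmul a y"
  by (simp add: vec_eq_iff algebra_simps)

lemma Gamma_bounds:
  assumes "\<phi> \<in> Gamma_set K"
  shows "0 \<le> \<phi> t" "\<phi> t \<le> K"
proof -
  have mono: "mono \<phi>" and l0: "(\<phi> \<longlongrightarrow> 0) at_bot" and lK: "(\<phi> \<longlongrightarrow> K) at_top"
    using assms unfolding Gamma_set_def by auto
  show "0 \<le> \<phi> t" unfolding less_eq_vec_def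
  proof
    fix i
    have "((\<lambda>s. \<phi> s $ i) \<longlongrightarrow> 0 $ i) at_bot" by (rule tendsto_vec_nth[OF l0])
    moreover have "eventually (\<lambda>s. \<phi> s $ i \<le> \<phi> t $ i) at_bot"
      unfolding eventually_at_bot_linorder
      by (rule exI[of _ t]) (auto dest: monoD[OF mono] simp: less_eq_vec_def)
    ultimately have "0 $ i \<le> \<phi> t $ i" by (rule tendsto_upperbound) simp
    then show "0 $ i \<le> \<phi> t $ i" .
  qed
  show "\<phi> t \<le> K" unfolding less_eq_vec_def
  proof
    fix i
    have "((\<lambda>s. \<phi> s $ i) \<longlongrightarrow> K $ i) at_top" by (rule tendsto_vec_nth[OF lK])
    moreover have "eventually (\<lambda>s. \<phi> t $ i \<le> \<phi> s $ i) at_top"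
      unfolding eventually_at_top_linorder
      by (rule exI[of _ t]) (auto dest: monoD[OF mono] simp: less_eq_vec_def)
    ultimately show "\<phi> t $ i \<le> K $ i" by (rule tendsto_lowerbound) simp
  qed
qed

definition qmono :: "((real \<Rightarrow> real^'n) \<Rightarrow> real^'n) \<Rightarrow> real \<Rightarrow> real \<Rightarrow> real^'n \<Rightarrow> real^'n \<Rightarrow> bool" where
  "qmono f c \<tau> \<beta> K \<longleftrightarrow> (\<forall>\<phi>' \<psi>'. continuous_on {-c*\<tau>..0} \<phi>' \<and> continuous_on {-c*\<tau>..0} \<psi>' \<and>
         (\<forall>\<theta>\<in>{-c*\<tau>..0}. 0 \<le> \<psi>' \<theta> \<and> \<psi>' \<theta> \<le> \<phi>' \<theta> \<and> \<phi>' \<theta> \<le> K) \<longrightarrow>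
         fc f c \<phi>' - fc f c \<psi>' + vmul \<beta> (\<phi>' 0 - \<psi>' 0) \<ge> 0)"

lemma shift_cont: "continuous_on UNIV \<psi> \<Longrightarrow> continuous_on S (shift \<psi> t)"
  unfolding shift_def by (auto intro!: continuous_intros continuous_on_compose2[of UNIV \<psi>])

lemma H_le:
  assumes qm: "qmono f c \<tau> \<beta> K"
    and c1: "continuous_on UNIV \<psi>1" and c2: "continuous_on UNIV \<psi>2"
    and b: "\<And>s. 0 \<le> \<psi>2 s \<and> \<psi>2 s \<le> \<psi>1 s \<and> \<psi>1 s \<le> K"
  shows "Hop f c \<beta> \<psi>2 t \<le> Hop f c \<beta> \<psi>1 t"
proof -
  have b1: "0 \<le> \<psi>1 s" for s using b order_trans by blast
  have "fc f c (shift \<psi>1 t) - fc f c (shift \<psi>2 t) + vmul \<beta> (shift \<psi>1 t 0 - shift \<psi>2 t 0) \<ge> 0"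
    by (rule qm[unfolded qmono_def, rule_format])
       (use shift_cont[OF c1] shift_cont[OF c2] b b1 in \<open>auto simp: shift_def\<close>)
  then show ?thesis unfolding Hop_def shift_def
    by (simp add: less_eq_vec_def algebra_simps)
qed

lemma H_bounds:
  assumes qm: "qmono f c \<tau> \<beta> K" and f0: "f (const_fun 0) = 0" and fK: "f (const_fun K) = 0"
    and c1: "continuous_on UNIV \<psi>"
    and b: "\<And>s. 0 \<le> \<psi> s \<and> \<psi> s \<le> K"
  shows "0 \<le> Hop f c \<beta> \<psi> t" "Hop f c \<beta> \<psi> t \<le> vmul \<beta> K"
proof -
  have H0: "Hop f c \<beta> (\<lambda>_. 0) t = 0"
    using f0 by (simp add: Hop_def fc_def shift_def const_fun_def vmul_def vec_eq_iff)
  have HK: "Hop f c \<beta> (\<lambda>_. K) t = vmul \<beta> K"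
    using fK by (simp add: Hop_def fc_def shift_def const_fun_def)
  have "Hop f c \<beta> (\<lambda>_. 0) t \<le> Hop f c \<beta> \<psi> t"
    by (rule H_le[OF qm c1]) (use b in auto)
  then show "0 \<le> Hop f c \<beta> \<psi> t" using H0 by simp
  have "Hop f c \<beta> \<psi> t \<le> Hop f c \<beta> (\<lambda>_. K) t"
    by (rule H_le[OF qm _ c1]) (use b in auto)
  then show "Hop f c \<beta> \<psi> t \<le> vmul \<beta> K" using HK by simp
qed

lemma H_mono:
  assumes qm: "qmono f c \<tau> \<beta> K" and c1: "continuous_on UNIV \<psi>"
    and m: "mono \<psi>" and b: "\<And>s. 0 \<le> \<psi> s \<and> \<psi> s \<le> K"
  shows "mono (Hop f c \<beta> \<psi>)"
proof (rule monoI)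
  fix s t :: real assume st: "s \<le> t"
  define \<psi>' where "\<psi>' x = \<psi> (x + (s - t))" for x
  have e: "Hop f c \<beta> \<psi> s = Hop f c \<beta> \<psi>' t"
    unfolding Hop_def shift_def \<psi>'_def by (simp add: algebra_simps)
  have c': "continuous_on UNIV \<psi>'" unfolding \<psi>'_def
    by (auto intro!: continuous_intros continuous_on_compose2[OF c1])
  have "Hop f c \<beta> \<psi>' t \<le> Hop f c \<beta> \<psi> t"
    by (rule H_le[OF qm c1 c']) (use b st in \<open>auto simp: \<psi>'_def intro: monoD[OF m]\<close>)
  then show "Hop f c \<beta> \<psi> s \<le> Hop f c \<beta> \<psi> t" using e by simp
qed

lemma H_cont:
  assumes fcont: "continuous_functional \<tau> f" and c: "c > 0" and tau: "\<tau> \<ge> 0"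
    and c1: "continuous_on UNIV \<psi>"
  shows "continuous_on UNIV (Hop f c \<beta> \<psi>)"
proof -
  have A: "isCont (\<lambda>t. fc f c (shift \<psi> t)) t0" for t0
    unfolding continuous_at_eps_delta
  proof (intro allI impI)
    fix e :: real assume e: "e > 0"
    define \<phi> where "\<phi> = (\<lambda>\<theta>. \<psi> (t0 + c * \<theta>))"
    have cphi: "continuous_on {-\<tau>..0} \<phi>" unfolding \<phi>_def
      by (auto intro!: continuous_intros continuous_on_compose2[OF c1])
    obtain \<delta> where del: "\<delta> > 0" "\<And>\<psi>'. continuous_on {-\<tau>..0} \<psi>' \<Longrightarrow>
        (\<forall>\<theta>\<in>{-\<tau>..0}. dist (\<psi>' \<theta>) (\<phi> \<theta>) < \<delta>) \<Longrightarrow> dist (f \<psi>') (f \<phi>) < e"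
      using fcont cphi e unfolding continuous_functional_def by meson
    define S where "S = {t0 - c*\<tau> - 1 .. t0 + 1}"
    have "uniformly_continuous_on S \<psi>"
      by (rule compact_uniformly_continuous) (auto simp: S_def intro: continuous_on_subset[OF c1])
    then obtain \<eta> where eta: "\<eta> > 0" "\<And>x x'. x \<in> S \<Longrightarrow> x' \<in> S \<Longrightarrow> dist x' x < \<eta> \<Longrightarrow> dist (\<psi> x') (\<psi> x) < \<delta>"
      unfolding uniformly_continuous_on_def using del(1) by metis
    show "\<exists>d>0. \<forall>y. dist y t0 < d \<longrightarrow> dist (fc f c (shift \<psi> y)) (fc f c (shift \<psi> t0)) < e"
    proof (intro exI[of _ "min 1 \<eta>"] conjI allI impI)
      show "min 1 \<eta> > 0" using eta by simp
      fix y assume y: "dist y t0 < min 1 \<eta>"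
      have cy: "continuous_on {-\<tau>..0} (\<lambda>\<theta>. \<psi> (y + c * \<theta>))"
        by (auto intro!: continuous_intros continuous_on_compose2[OF c1])
      have "\<forall>\<theta>\<in>{-\<tau>..0}. dist (\<psi> (y + c * \<theta>)) (\<phi> \<theta>) < \<delta>"
      proof
        fix \<theta> assume th: "\<theta> \<in> {-\<tau>..0}"
        have ct: "-(c*\<tau>) \<le> c * \<theta>" "c * \<theta> \<le> 0"
          using th c mult_left_mono[of "-\<tau>" \<theta> c] by (auto simp: mult_le_0_iff)
        have yt: "\<bar>y - t0\<bar> < 1" "\<bar>y - t0\<bar> < \<eta>" using y by (auto simp: dist_real_def)
        have "t0 + c * \<theta> \<in> S" "y + c * \<theta> \<in> S" unfolding S_def using ct yt by auto
        moreover have "dist (y + c * \<theta>) (t0 + c * \<theta>) < \<eta>" using yt by (simp add: dist_real_def)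
        ultimately show "dist (\<psi> (y + c * \<theta>)) (\<phi> \<theta>) < \<delta>" unfolding \<phi>_def by (rule eta(2))
      qed
      then have "dist (f (\<lambda>\<theta>. \<psi> (y + c * \<theta>))) (f \<phi>) < e" using del(2)[OF cy] by blast
      then show "dist (fc f c (shift \<psi> y)) (fc f c (shift \<psi> t0)) < e"
        unfolding fc_def shift_def \<phi>_def by simp
    qed
  qed
  have B: "continuous_on UNIV (\<lambda>t. vmul \<beta> (\<psi> t))"
    unfolding vmul_def by (intro continuous_on_vec_lambda continuous_intros continuous_on_component c1)
  show ?thesis unfolding Hop_def
    by (intro continuous_intros B continuous_at_imp_continuous_on ballI A)
qed




lemma cmp:
  fixes p pd pdd q qd qdd :: "real \<Rightarrow> real" and d c \<beta> Ma Mb :: real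
  assumes d: "d > 0" and be: "\<beta> > 0"
    and dp: "\<And>t. (p has_real_derivative pd t) (at t)" and cpd: "continuous_on UNIV pd"
    and dpd: "\<And>t. t \<noteq> 0 \<Longrightarrow> (pd has_real_derivative pdd t) (at t)"
    and dq: "\<And>t. (q has_real_derivative qd t) (at t)" and cqd: "continuous_on UNIV qd"
    and dqd: "\<And>t. t \<noteq> 0 \<Longrightarrow> (qd has_real_derivative qdd t) (at t)"
    and lp: "\<And>t. p t \<ge> -Ma" and uq: "\<And>t. q t \<le> Mb"
    and ineq: "\<And>t. t \<noteq> 0 \<Longrightarrow> d * (pdd t - qdd t) - c * (pd t - qd t) - \<beta> * (p t - q t) \<le> 0"
  shows "q t \<le> p t"
proof -
  have "p t - q t \<ge> 0"
  proof (rule maxp[where u = "\<lambda>t. p t - q t" and ud = "\<lambda>t. pd t - qd t" and udd = "\<lambda>t. pdd t - qdd t" and d = d and c = c and \<beta> = \<beta> and M = "Ma + Mb"])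
    show "((\<lambda>t. p t - q t) has_real_derivative pd t - qd t) (at t)" for t
      by (intro derivative_intros dp dq)
    show "continuous_on UNIV (\<lambda>t. pd t - qd t)" by (intro continuous_intros cpd cqd)
    show "((\<lambda>t. pd t - qd t) has_real_derivative pdd t - qdd t) (at t)" if "t \<noteq> 0" for t
      by (intro derivative_intros dpd dqd that)
    show "- (Ma + Mb) \<le> p t - q t" for t using lp[of t] uq[of t] by linarith
    show "d * (pdd t - qdd t) - c * (pd t - qd t) - \<beta> * (p t - q t) \<le> 0" if "t \<noteq> 0" for t
      using ineq[OF that] .
  qed (use d be in auto)
  then show ?thesis by simp
qed


theorem mainTheorem2:
  fixes \<tau> c :: real and d \<beta> K :: "real^'n"
    and f :: "(real \<Rightarrow> real^'n) \<Rightarrow> real^'n"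
    and \<phi> \<phi>0 :: "real \<Rightarrow> real^'n"
  assumes tau: "\<tau> \<ge> 0" and c: "c > 0"
    and d: "\<forall>i. d$i > 0" and K: "\<forall>i. K$i > 0" and beta: "\<forall>i. \<beta>$i > 0"
    and f_local: "local_functional \<tau> f"
    and f_cont: "continuous_functional \<tau> f"
    and f0: "f (const_fun 0) = 0" and fK: "f (const_fun K) = 0"
    and f_nz: "\<forall>u\<in>{0..K} - {0, K}. f (const_fun u) \<noteq> 0"
    and quasi_mono: "\<forall>\<phi>' \<psi>'. continuous_on {-c*\<tau>..0} \<phi>' \<and> continuous_on {-c*\<tau>..0} \<psi>' \<and>
         (\<forall>\<theta>\<in>{-c*\<tau>..0}. 0 \<le> \<psi>' \<theta> \<and> \<psi>' \<theta> \<le> \<phi>' \<theta> \<and> \<phi>' \<theta> \<le> K) \<longrightarrow>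
         fc f c \<phi>' - fc f c \<psi>' + vmul \<beta> (\<phi>' 0 - \<psi>' 0) \<ge> 0"
    and phi: "\<phi> \<in> Gamma_set K" and phi0: "\<phi>0 \<in> Gamma_set K"
    and lower: "quasi_lower_solution f c d \<phi>"
    and upper: "quasi_upper_solution f c d \<phi>0"
    and le: "\<forall>t. \<phi> t \<le> \<phi>0 t"
  shows "Gop c \<beta> d (Hop f c \<beta> \<phi>0) \<in> Gamma_set K
    \<and> upper_solution f c d (Gop c \<beta> d (Hop f c \<beta> \<phi>0))
    \<and> (\<forall>t. \<phi> t \<le> Gop c \<beta> d (Hop f c \<beta> \<phi>0) t \<and> Gop c \<beta> d (Hop f c \<beta> \<phi>0) t \<le> \<phi>0 t)"
proof -
  have qm: "qmono f c \<tau> \<beta> K" using quasi_mono unfolding qmono_def by blast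
  have phB: "0 \<le> \<phi> t \<and> \<phi> t \<le> K" for t using Gamma_bounds[OF phi] by auto
  have ph0B: "0 \<le> \<phi>0 t \<and> \<phi>0 t \<le> K" for t using Gamma_bounds[OF phi0] by auto
  have cph: "continuous_on UNIV \<phi>" using phi unfolding Gamma_set_def by auto
  have cph0: "continuous_on UNIV \<phi>0" using phi0 unfolding Gamma_set_def by auto
  have mph0: "mono \<phi>0" using phi0 unfolding Gamma_set_def by auto
  define H0 where "H0 = Hop f c \<beta> \<phi>0"
  define H where "H = Hop f c \<beta> \<phi>"
  define \<phi>1 where "\<phi>1 = Gop c \<beta> d H0"
  have H0B: "0 \<le> H0 t \<and> H0 t \<le> vmul \<beta> K" for t
    unfolding H0_def using H_bounds[OF qm f0 fK cph0 ph0B] by auto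
  have HB: "0 \<le> H t \<and> H t \<le> vmul \<beta> K" for t
    unfolding H_def using H_bounds[OF qm f0 fK cph phB] by auto
  have cH0: "continuous_on UNIV H0" unfolding H0_def by (rule H_cont[OF f_cont c tau cph0])
  have cH: "continuous_on UNIV H" unfolding H_def by (rule H_cont[OF f_cont c tau cph])
  have mH0: "mono H0" unfolding H0_def by (rule H_mono[OF qm cph0 mph0 ph0B])
  have HH0: "H t \<le> H0 t" for t
    unfolding H_def H0_def by (rule H_le[OF qm cph0 cph]) (use phB ph0B le in auto)
  define a where "a i = lam1 c (\<beta>$i) (d$i)" for i
  define b where "b i = lam2 c (\<beta>$i) (d$i)" for i
  define k where "k i = 1 / (d$i * (b i - a i))" for i
  have lf: "a i < 0" "b i > 0" "d$i * (a i)^2 - c * a i - \<beta>$i = 0" "d$i * (b i)^2 - c * b i - \<beta>$i = 0"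
      "k i * (d$i * (b i - a i)) = 1" for i
    unfolding a_def b_def k_def using lam_facts[of "d$i" "\<beta>$i" c] d beta by auto
  define g where "g i h = (\<lambda>t. k i * (I1 (a i) h t + I2 (b i) h t))" for i h
  define g1 where "g1 i h = (\<lambda>t. k i * (a i * I1 (a i) h t + b i * I2 (b i) h t))" for i h
  define g2 where "g2 i h = (\<lambda>t. k i * (a i * (a i * I1 (a i) h t + h t) + b i * (b i * I2 (b i) h t - h t)))" for i h
  have GP: "(\<forall>t. (g i h has_real_derivative g1 i h t) (at t)) \<and> (\<forall>t. (g1 i h has_real_derivative g2 i h t) (at t))
    \<and> continuous_on UNIV (g1 i h) \<and> continuous_on UNIV (g2 i h)
    \<and> (\<exists>B. \<forall>t. \<bar>g i h t\<bar> \<le> B) \<and> (\<exists>B. \<forall>t. \<bar>g1 i h t\<bar> \<le> B) \<and> (\<exists>B. \<forall>t. \<bar>g2 i h t\<bar> \<le> B)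
    \<and> (\<forall>t. d$i * g2 i h t - c * g1 i h t - \<beta>$i * g i h t + h t = 0)"
    if hc: "continuous_on UNIV h" and hb: "\<And>s. \<bar>h s\<bar> \<le> M" for i h M
    unfolding g_def g1_def g2_def
    using G_props[OF lf(1,2,3,4,5) hc hb] by blast
  define h0 where "h0 i = (\<lambda>t. H0 t $ i)" for i
  define h where "h i = (\<lambda>t. H t $ i)" for i
  have ch0: "continuous_on UNIV (h0 i)" for i unfolding h0_def by (intro continuous_on_component cH0)
  have ch: "continuous_on UNIV (h i)" for i unfolding h_def by (intro continuous_on_component cH)
  have bh0: "\<bar>h0 i s\<bar> \<le> \<beta>$i * K$i" for i s
    using H0B[of s] unfolding h0_def by (auto simp: less_eq_vec_def)
  have bh: "\<bar>h i s\<bar> \<le> \<beta>$i * K$i" for i s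
    using HB[of s] unfolding h_def by (auto simp: less_eq_vec_def)
  note GP0 = GP[OF ch0 bh0] and GPh = GP[OF ch bh]
  have phi1c: "\<phi>1 t $ i = g i (h0 i) t" for t i
    unfolding \<phi>1_def Gop_def g_def k_def a_def b_def I1_def I2_def h0_def by simp

  obtain U1 U2 where reg0: "quasi_solution_regular \<phi>0 U1 U2"
      and w0: "\<And>t. t \<noteq> 0 \<Longrightarrow> wave_lhs f c d \<phi>0 (U1 t) (U2 t) t \<le> 0"
    using upper unfolding quasi_upper_solution_def by blast
  obtain L1 L2 where regl: "quasi_solution_regular \<phi> L1 L2"
      and wl: "\<And>t. t \<noteq> 0 \<Longrightarrow> wave_lhs f c d \<phi> (L1 t) (L2 t) t \<ge> 0"
    using lower unfolding quasi_lower_solution_def by blast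
  have dU: "((\<lambda>x. \<phi>0 x $ i) has_real_derivative U1 t $ i) (at t)" for i t
    using reg0 unfolding quasi_solution_regular_def by (blast intro: vec_deriv_comp)
  have cU1: "continuous_on UNIV (\<lambda>t. U1 t $ i)" for i
    using reg0 unfolding quasi_solution_regular_def by (blast intro: continuous_on_component)
  have dU1: "((\<lambda>x. U1 x $ i) has_real_derivative U2 t $ i) (at t)" if "t \<noteq> 0" for i t
    using reg0 that unfolding quasi_solution_regular_def by (blast intro: vec_deriv_comp)
  have dL: "((\<lambda>x. \<phi> x $ i) has_real_derivative L1 t $ i) (at t)" for i t
    using regl unfolding quasi_solution_regular_def by (blast intro: vec_deriv_comp)
  have cL1: "continuous_on UNIV (\<lambda>t. L1 t $ i)" for i
    using regl unfolding quasi_solution_regular_def by (blast intro: continuous_on_component)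
  have dL1: "((\<lambda>x. L1 x $ i) has_real_derivative L2 t $ i) (at t)" if "t \<noteq> 0" for i t
    using regl that unfolding quasi_solution_regular_def by (blast intro: vec_deriv_comp)
  have di: "d$i > 0" and bi: "\<beta>$i > 0" for i using d beta by auto

  have A: "g i (h0 i) t \<le> \<phi>0 t $ i" for t i
  proof -
    obtain B where B: "\<forall>t. \<bar>g i (h0 i) t\<bar> \<le> B" using GP0[of i] by blast
    show ?thesis
    proof (rule cmp[where p = "\<lambda>t. \<phi>0 t $ i" and pd = "\<lambda>t. U1 t $ i" and pdd = "\<lambda>t. U2 t $ i"
        and q = "g i (h0 i)" and qd = "g1 i (h0 i)" and qdd = "g2 i (h0 i)" and Ma = 0 and Mb = B
        and d = "d$i" and \<beta> = "\<beta>$i" and c = c])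
      show "0 < d$i" "0 < \<beta>$i" by (rule di, rule bi)
      show "((\<lambda>t. \<phi>0 t $ i) has_real_derivative U1 t $ i) (at t)" for t by (rule dU)
      show "continuous_on UNIV (\<lambda>t. U1 t $ i)" by (rule cU1)
      show "((\<lambda>t. U1 t $ i) has_real_derivative U2 t $ i) (at t)" if "t \<noteq> 0" for t by (rule dU1[OF that])
      show "(g i (h0 i) has_real_derivative g1 i (h0 i) t) (at t)" for t using GP0 by blast
      show "continuous_on UNIV (g1 i (h0 i))" using GP0 by blast
      show "(g1 i (h0 i) has_real_derivative g2 i (h0 i) t) (at t)" for t using GP0 by blast
      show "- 0 \<le> \<phi>0 t $ i" for t using ph0B[of t] by (simp add: less_eq_vec_def)
      show "g i (h0 i) t \<le> B" for t using B by (simp add: abs_le_iff)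
      show "d$i * (U2 t $ i - g2 i (h0 i) t) - c * (U1 t $ i - g1 i (h0 i) t) - \<beta>$i * (\<phi>0 t $ i - g i (h0 i) t) \<le> 0"
        if "t \<noteq> 0" for t
      proof -
        have w: "d$i * U2 t $ i - c * U1 t $ i + fc f c (shift \<phi>0 t) $ i \<le> 0"
          using w0[OF that] by (simp add: wave_lhs_def less_eq_vec_def)
        have o: "d$i * g2 i (h0 i) t - c * g1 i (h0 i) t - \<beta>$i * g i (h0 i) t + h0 i t = 0" using GP0 by blast
        have hd: "h0 i t = fc f c (shift \<phi>0 t) $ i + \<beta>$i * \<phi>0 t $ i" by (simp add: h0_def H0_def Hop_def)
        have "d$i * (U2 t $ i - g2 i (h0 i) t) - c * (U1 t $ i - g1 i (h0 i) t) - \<beta>$i * (\<phi>0 t $ i - g i (h0 i) t)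
          = (d$i * U2 t $ i - c * U1 t $ i + fc f c (shift \<phi>0 t) $ i) - (d$i * g2 i (h0 i) t - c * g1 i (h0 i) t - \<beta>$i * g i (h0 i) t + h0 i t)"
          by (simp add: hd algebra_simps)
        then show ?thesis using w o by linarith
      qed
    qed
  qed

  have Bl: "\<phi> t $ i \<le> g i (h i) t" for t i
  proof -
    obtain B where B: "\<forall>t. \<bar>g i (h i) t\<bar> \<le> B" using GPh[of i] by blast
    show ?thesis
    proof (rule cmp[where q = "\<lambda>t. \<phi> t $ i" and qd = "\<lambda>t. L1 t $ i" and qdd = "\<lambda>t. L2 t $ i"
        and p = "g i (h i)" and pd = "g1 i (h i)" and pdd = "g2 i (h i)" and Ma = B and Mb = "K$i"
        and d = "d$i" and \<beta> = "\<beta>$i" and c = c])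
      show "0 < d$i" "0 < \<beta>$i" by (rule di, rule bi)
      show "((\<lambda>t. \<phi> t $ i) has_real_derivative L1 t $ i) (at t)" for t by (rule dL)
      show "continuous_on UNIV (\<lambda>t. L1 t $ i)" by (rule cL1)
      show "((\<lambda>t. L1 t $ i) has_real_derivative L2 t $ i) (at t)" if "t \<noteq> 0" for t by (rule dL1[OF that])
      show "(g i (h i) has_real_derivative g1 i (h i) t) (at t)" for t using GPh by blast
      show "continuous_on UNIV (g1 i (h i))" using GPh by blast
      show "(g1 i (h i) has_real_derivative g2 i (h i) t) (at t)" for t using GPh by blast
      show "\<phi> t $ i \<le> K$i" for t using phB[of t] by (simp add: less_eq_vec_def)
      show "- B \<le> g i (h i) t" for t using abs_le_D2[OF B[rule_format, of t]] by linarith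
      show "d$i * (g2 i (h i) t - L2 t $ i) - c * (g1 i (h i) t - L1 t $ i) - \<beta>$i * (g i (h i) t - \<phi> t $ i) \<le> 0"
        if "t \<noteq> 0" for t
      proof -
        have w: "d$i * L2 t $ i - c * L1 t $ i + fc f c (shift \<phi> t) $ i \<ge> 0"
          using wl[OF that] by (simp add: wave_lhs_def less_eq_vec_def)
        have o: "d$i * g2 i (h i) t - c * g1 i (h i) t - \<beta>$i * g i (h i) t + h i t = 0" using GPh by blast
        have hd: "h i t = fc f c (shift \<phi> t) $ i + \<beta>$i * \<phi> t $ i" by (simp add: h_def H_def Hop_def)
        have "d$i * (g2 i (h i) t - L2 t $ i) - c * (g1 i (h i) t - L1 t $ i) - \<beta>$i * (g i (h i) t - \<phi> t $ i)
          = (d$i * g2 i (h i) t - c * g1 i (h i) t - \<beta>$i * g i (h i) t + h i t) - (d$i * L2 t $ i - c * L1 t $ i + fc f c (shift \<phi> t) $ i)"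
          by (simp add: hd algebra_simps)
        then show ?thesis using w o by linarith
      qed
    qed
  qed

  have C: "g i (h i) t \<le> g i (h0 i) t" for t i
  proof -
    obtain B where B: "\<forall>t. \<bar>g i (h i) t\<bar> \<le> B" using GPh[of i] by blast
    obtain B' where B': "\<forall>t. \<bar>g i (h0 i) t\<bar> \<le> B'" using GP0[of i] by blast
    show ?thesis
    proof (rule cmp[where q = "g i (h i)" and qd = "g1 i (h i)" and qdd = "g2 i (h i)"
        and p = "g i (h0 i)" and pd = "g1 i (h0 i)" and pdd = "g2 i (h0 i)" and Ma = B' and Mb = B
        and d = "d$i" and \<beta> = "\<beta>$i" and c = c])
      show "0 < d$i" "0 < \<beta>$i" by (rule di, rule bi)
      show "(g i (h i) has_real_derivative g1 i (h i) t) (at t)" for t using GPh by blast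
      show "continuous_on UNIV (g1 i (h i))" using GPh by blast
      show "(g1 i (h i) has_real_derivative g2 i (h i) t) (at t)" for t using GPh by blast
      show "(g i (h0 i) has_real_derivative g1 i (h0 i) t) (at t)" for t using GP0 by blast
      show "continuous_on UNIV (g1 i (h0 i))" using GP0 by blast
      show "(g1 i (h0 i) has_real_derivative g2 i (h0 i) t) (at t)" for t using GP0 by blast
      show "g i (h i) t \<le> B" for t using B by (simp add: abs_le_iff)
      show "- B' \<le> g i (h0 i) t" for t using abs_le_D2[OF B'[rule_format, of t]] by linarith
      show "d$i * (g2 i (h0 i) t - g2 i (h i) t) - c * (g1 i (h0 i) t - g1 i (h i) t) - \<beta>$i * (g i (h0 i) t - g i (h i) t) \<le> 0"
        for t
      proof -
        have o: "d$i * g2 i (h i) t - c * g1 i (h i) t - \<beta>$i * g i (h i) t + h i t = 0" using GPh by blast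
        have o0: "d$i * g2 i (h0 i) t - c * g1 i (h0 i) t - \<beta>$i * g i (h0 i) t + h0 i t = 0" using GP0 by blast
        have hh: "h i t \<le> h0 i t" using HH0[of t] unfolding h_def h0_def by (simp add: less_eq_vec_def)
        have "d$i * (g2 i (h0 i) t - g2 i (h i) t) - c * (g1 i (h0 i) t - g1 i (h i) t) - \<beta>$i * (g i (h0 i) t - g i (h i) t)
          = (d$i * g2 i (h0 i) t - c * g1 i (h0 i) t - \<beta>$i * g i (h0 i) t + h0 i t) - (d$i * g2 i (h i) t - c * g1 i (h i) t - \<beta>$i * g i (h i) t + h i t) - h0 i t + h i t"
          by (simp add: algebra_simps)
        then show ?thesis using o o0 hh by linarith
      qed
    qed
  qed

  have D: "g i (h0 i) t \<le> g i (h0 i) (t + r)" if r: "r \<ge> 0" for t i r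
  proof -
    obtain B' where B': "\<forall>t. \<bar>g i (h0 i) t\<bar> \<le> B'" using GP0[of i] by blast
    have dg: "(g i (h0 i) has_real_derivative g1 i (h0 i) t) (at t)" for t using GP0 by blast
    have dg1: "(g1 i (h0 i) has_real_derivative g2 i (h0 i) t) (at t)" for t using GP0 by blast
    have cg1: "continuous_on UNIV (g1 i (h0 i))" using GP0 by blast
    show ?thesis
    proof (rule cmp[where q = "g i (h0 i)" and qd = "g1 i (h0 i)" and qdd = "g2 i (h0 i)"
        and p = "\<lambda>t. g i (h0 i) (t + r)" and pd = "\<lambda>t. g1 i (h0 i) (t + r)" and pdd = "\<lambda>t. g2 i (h0 i) (t + r)"
        and Ma = B' and Mb = B' and d = "d$i" and \<beta> = "\<beta>$i" and c = c])
      show "0 < d$i" "0 < \<beta>$i" by (rule di, rule bi)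
      show "(g i (h0 i) has_real_derivative g1 i (h0 i) t) (at t)" for t by (rule dg)
      show "continuous_on UNIV (g1 i (h0 i))" by (rule cg1)
      show "(g1 i (h0 i) has_real_derivative g2 i (h0 i) t) (at t)" for t by (rule dg1)
      show "((\<lambda>t. g i (h0 i) (t + r)) has_real_derivative g1 i (h0 i) (t + r)) (at t)" for t
        using dg[of "t + r"] by (simp add: DERIV_shift)
      show "((\<lambda>t. g1 i (h0 i) (t + r)) has_real_derivative g2 i (h0 i) (t + r)) (at t)" for t
        using dg1[of "t + r"] by (simp add: DERIV_shift)
      show "continuous_on UNIV (\<lambda>t. g1 i (h0 i) (t + r))"
        by (rule continuous_on_compose2[OF cg1]) (auto intro!: continuous_intros)
      show "g i (h0 i) t \<le> B'" for t using B' by (simp add: abs_le_iff)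
      show "- B' \<le> g i (h0 i) (t + r)" for t using abs_le_D2[OF B'[rule_format, of "t + r"]] by linarith
      show "d$i * (g2 i (h0 i) (t + r) - g2 i (h0 i) t) - c * (g1 i (h0 i) (t + r) - g1 i (h0 i) t) - \<beta>$i * (g i (h0 i) (t + r) - g i (h0 i) t) \<le> 0"
        for t
      proof -
        have o: "d$i * g2 i (h0 i) t - c * g1 i (h0 i) t - \<beta>$i * g i (h0 i) t + h0 i t = 0" using GP0 by blast
        have o0: "d$i * g2 i (h0 i) (t + r) - c * g1 i (h0 i) (t + r) - \<beta>$i * g i (h0 i) (t + r) + h0 i (t + r) = 0" using GP0 by blast
        have hh: "h0 i t \<le> h0 i (t + r)" using monoD[OF mH0, of t "t + r"] r unfolding h0_def by (simp add: less_eq_vec_def)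
        have "d$i * (g2 i (h0 i) (t + r) - g2 i (h0 i) t) - c * (g1 i (h0 i) (t + r) - g1 i (h0 i) t) - \<beta>$i * (g i (h0 i) (t + r) - g i (h0 i) t)
          = (d$i * g2 i (h0 i) (t + r) - c * g1 i (h0 i) (t + r) - \<beta>$i * g i (h0 i) (t + r) + h0 i (t + r)) - (d$i * g2 i (h0 i) t - c * g1 i (h0 i) t - \<beta>$i * g i (h0 i) t + h0 i t) - h0 i (t + r) + h0 i t"
          by (simp add: algebra_simps)
        then show ?thesis using o o0 hh by linarith
      qed
    qed
  qed

  have le1: "\<phi>1 t \<le> \<phi>0 t" for t using A unfolding less_eq_vec_def phi1c by blast
  have le2: "\<phi> t \<le> \<phi>1 t" for t using Bl C order_trans unfolding less_eq_vec_def phi1c by blast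
  have p1B: "0 \<le> \<phi>1 s \<and> \<phi>1 s \<le> \<phi>0 s \<and> \<phi>0 s \<le> K" for s
    using le1[of s] le2[of s] phB[of s] ph0B[of s] order_trans by blast
  define R1 where "R1 t = (\<chi> i. g1 i (h0 i) t)" for t
  define R2 where "R2 t = (\<chi> i. g2 i (h0 i) t)" for t
  have compfun: "(\<lambda>x. \<phi>1 x $ i) = g i (h0 i)" for i by (simp add: fun_eq_iff phi1c)
  have dphi1: "(\<phi>1 has_vector_derivative R1 t) (at t)" for t
    unfolding R1_def by (rule vec_deriv_from_comp) (use GP0 in \<open>simp add: compfun\<close>)
  have dR1: "(R1 has_vector_derivative R2 t) (at t)" for t
    unfolding R2_def by (rule vec_deriv_from_comp) (use GP0 in \<open>simp add: R1_def\<close>)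
  have cphi1: "continuous_on UNIV \<phi>1"
    using dphi1 by (meson continuous_at_imp_continuous_on has_vector_derivative_continuous)
  have cR2: "continuous_on UNIV R2"
    unfolding R2_def by (intro continuous_on_vec_lambda) (use GP0 in blast)
  have mphi1: "mono \<phi>1"
  proof (rule monoI)
    fix s t :: real assume "s \<le> t"
    then have "g i (h0 i) s \<le> g i (h0 i) (s + (t - s))" for i by (intro D) simp
    then show "\<phi>1 s \<le> \<phi>1 t" unfolding less_eq_vec_def phi1c by simp
  qed
  have lim0: "(\<phi>1 \<longlongrightarrow> 0) at_bot"
  proof (rule vec_tendstoI)
    fix i
    have l1: "((\<lambda>x. \<phi> x $ i) \<longlongrightarrow> 0 $ i) at_bot" by (rule tendsto_vec_nth) (use phi in \<open>simp add: Gamma_set_def\<close>)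
    have l2: "((\<lambda>x. \<phi>0 x $ i) \<longlongrightarrow> 0 $ i) at_bot" by (rule tendsto_vec_nth) (use phi0 in \<open>simp add: Gamma_set_def\<close>)
    show "((\<lambda>x. \<phi>1 x $ i) \<longlongrightarrow> 0 $ i) at_bot"
      by (rule tendsto_sandwich[OF always_eventually always_eventually l1 l2])
         (use le1 le2 in \<open>unfold less_eq_vec_def, blast+\<close>)
  qed
  have limK: "(\<phi>1 \<longlongrightarrow> K) at_top"
  proof (rule vec_tendstoI)
    fix i
    have l1: "((\<lambda>x. \<phi> x $ i) \<longlongrightarrow> K $ i) at_top" by (rule tendsto_vec_nth) (use phi in \<open>simp add: Gamma_set_def\<close>)
    have l2: "((\<lambda>x. \<phi>0 x $ i) \<longlongrightarrow> K $ i) at_top" by (rule tendsto_vec_nth) (use phi0 in \<open>simp add: Gamma_set_def\<close>)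
    show "((\<lambda>x. \<phi>1 x $ i) \<longlongrightarrow> K $ i) at_top"
      by (rule tendsto_sandwich[OF always_eventually always_eventually l1 l2])
         (use le1 le2 in \<open>unfold less_eq_vec_def, blast+\<close>)
  qed
  have bphi1: "bounded (range \<phi>1)"
  proof (rule bounded_range_vec)
    fix i
    show "\<exists>B. \<forall>t. \<bar>\<phi>1 t $ i\<bar> \<le> B"
    proof (intro exI allI)
      fix t
      have "0 \<le> \<phi>1 t $ i" "\<phi>1 t $ i \<le> \<phi>0 t $ i" "\<phi>0 t $ i \<le> K $ i"
        using p1B[of t] unfolding less_eq_vec_def by simp_all
      then show "\<bar>\<phi>1 t $ i\<bar> \<le> K $ i" by simp
    qed
  qed
  have bR1: "bounded (range R1)"
    by (rule bounded_range_vec) (use GP0 in \<open>simp add: R1_def\<close>)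
  have bR2: "bounded (range R2)"
    by (rule bounded_range_vec) (use GP0 in \<open>simp add: R2_def\<close>)
  have wave: "wave_lhs f c d \<phi>1 (R1 t) (R2 t) t \<le> 0" for t
  proof -
    have HH: "Hop f c \<beta> \<phi>1 t \<le> Hop f c \<beta> \<phi>0 t" by (rule H_le[OF qm cph0 cphi1 p1B])
    show ?thesis unfolding less_eq_vec_def
    proof
      fix i
      have o: "d$i * g2 i (h0 i) t - c * g1 i (h0 i) t - \<beta>$i * g i (h0 i) t + h0 i t = 0" using GP0 by blast
      have hh: "fc f c (shift \<phi>1 t) $ i + \<beta>$i * \<phi>1 t $ i \<le> h0 i t"
        using HH unfolding less_eq_vec_def h0_def H0_def Hop_def by simp
      have "wave_lhs f c d \<phi>1 (R1 t) (R2 t) t $ i = d$i * g2 i (h0 i) t - c * g1 i (h0 i) t + fc f c (shift \<phi>1 t) $ i"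
        by (simp add: wave_lhs_def R1_def R2_def)
      then show "wave_lhs f c d \<phi>1 (R1 t) (R2 t) t $ i \<le> 0 $ i" using o hh phi1c[of t i] by simp
    qed
  qed
  have "\<phi>1 \<in> Gamma_set K" unfolding Gamma_set_def using cphi1 mphi1 lim0 limK by blast
  moreover have "upper_solution f c d \<phi>1"
    unfolding upper_solution_def using dphi1 dR1 cR2 bphi1 bR1 bR2 wave by blast
  ultimately show ?thesis using le1 le2 unfolding \<phi>1_def H0_def by blast
qed


end
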